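(* Let $(X,d,\mu)$ be a space of homogeneous type, let $p(\cdot)\in\mathrm{LH}$ with associated limit value $p_\infty$, let $w\in A_{p(\cdot)}$ and $W(x)=w(x)^{p(x)}$. Then there are constants $c,C>0$ (independent of the ball) such that for every ball $B$ with $\|w\chi_B\|_{p(\cdot)}\ge1$, \[ c\,W(B)^{1/p_\infty}\le\|w\chi_B\|_{p(\cdot)}\le C\,W(B)^{1/p_\infty}, \] where $W(B)=\int_B W\,d\mu$.
   Context: A space of homogeneous type $(X,d,\mu)$: $X$ nonempty, $d$ a quasi-metric ($d(x,y)=0$ iff $x=y$, symmetric, $d(x,y)\le A_0(d(x,z)+d(z,y))$ for some $A_0\ge1$), $\mu$ a regular measure on the $\sigma$-algebra generated by balls $B(x,r)=\{y:d(x,y)<r\}$ and open sets, with $0<\mu(B(x,2r))\le C_\mu\mu(B(x,r))<\infty$. An exponent is a measurable $p:X\to[1,\infty]$. With $X_\infty=\{p=\infty\}$, $\rho_{p(\cdot)}(f)=\int_{X\setminus X_\infty}|f(x)|^{p(x)}d\mu+\|f\|_{L^\infty(X_\infty)}$ and $\|f\|_{p(\cdot)}=\inf\{\lambda>0:\rho_{p(\cdot)}(f/\lambda)\le1\}$; $p'(x)=p(x)/(p(x)-1)$ (with $1/0=\infty$, $1/\infty=0$). $p(\cdot)\in\mathrm{LH}_0$ if there is $C_0$ with $|p(x)-p(y)|<-C_0/\log d(x,y)$ whenever $d(x,y)<1/2$; $p(\cdot)\in\mathrm{LH}_\infty$ if there are constants $C_\infty,p_\infty$ with $|p(x)-p_\infty|<C_\infty/\log(e+d(x,x_0))$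 for all $x$, for a fixed base point $x_0$ (choice irrelevant); $\mathrm{LH}=\mathrm{LH}_0\cap\mathrm{LH}_\infty$. A weight is a locally integrable $w:X\to[0,\infty]$ with $0<w<\infty$ a.e.; $w\in A_{p(\cdot)}$ means there is $K$ with $\|w\chi_B\|_{p(\cdot)}\|w^{-1}\chi_B\|_{p'(\cdot)}\le K\mu(B)$ for every ball $B$. *)

theory Defs
  imports "HOL-Analysis.Analysis" "HOL-Probability.Essential_Supremum"
begin

definition qball :: "('a \<Rightarrow> 'a \<Rightarrow> real) \<Rightarrow> 'a \<Rightarrow> real \<Rightarrow> 'a set" where
  "qball d x r = {y. d x y < r}"

definition qopen :: "('a \<Rightarrow> 'a \<Rightarrow> real) \<Rightarrow> 'a set \<Rightarrow> bool" where
  "qopen d U \<longleftrightarrow> (\<forall>x\<in>U. \<exists>r>0. qball d x r \<subseteq> U)"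

definition quasi_metric :: "('a \<Rightarrow> 'a \<Rightarrow> real) \<Rightarrow> real \<Rightarrow> bool" where
  "quasi_metric d A0 \<longleftrightarrow> A0 \<ge> 1 \<and> (\<forall>x y. d x y \<ge> 0) \<and> (\<forall>x y. d x y = 0 \<longleftrightarrow> x = y)
     \<and> (\<forall>x y. d x y = d y x) \<and> (\<forall>x y z. d x y \<le> A0 * (d x z + d z y))"

definition homogeneous_type :: "('a \<Rightarrow> 'a \<Rightarrow> real) \<Rightarrow> 'a measure \<Rightarrow> bool" where
  "homogeneous_type d M \<longleftrightarrow>
     (\<exists>A0. quasi_metric d A0) \<and>
     space M = UNIV \<and>
     sets M = sigma_sets UNIV ({qball d x r | x r. True} \<union> {U. qopen d U}) \<and>
     (\<forall>E\<in>sets M. emeasure M E = (INF U\<in>{U. qopen d U \<and> E \<subseteq> U}. emeasure M U)) \<and>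
     (\<exists>C\<mu>. \<forall>x r. r > 0 \<longrightarrow>
        0 < emeasure M (qball d x (2*r)) \<and>
        emeasure M (qball d x (2*r)) \<le> ennreal C\<mu> * emeasure M (qball d x r) \<and>
        emeasure M (qball d x r) < \<infinity>)"

definition exponent :: "'a measure \<Rightarrow> ('a \<Rightarrow> ereal) \<Rightarrow> bool" where
  "exponent M p \<longleftrightarrow> p \<in> borel_measurable M \<and> (\<forall>x. 1 \<le> p x)"

definition Xinf :: "('a \<Rightarrow> ereal) \<Rightarrow> 'a set" where
  "Xinf p = {x. p x = \<infinity>}"

definition modular :: "'a measure \<Rightarrow> ('a \<Rightarrow> ereal) \<Rightarrow> ('a \<Rightarrow> real) \<Rightarrow> ennreal" where
  "modular M p f =
     (\<integral>\<^sup>+ x. indicator (- Xinf p) x * ennreal (\<bar>f x\<bar> powr real_of_ereal (p x)) \<partial>M)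
     + esssup M (\<lambda>x. ennreal \<bar>f x\<bar> * indicator (Xinf p) x)"

text \<open>The Luxemburg norm (value \<infinity> if no admissible lambda exists).\<close>
definition vnorm :: "'a measure \<Rightarrow> ('a \<Rightarrow> ereal) \<Rightarrow> ('a \<Rightarrow> real) \<Rightarrow> ennreal" where
  "vnorm M p f = (INF t\<in>{t::real. t > 0 \<and> modular M p (\<lambda>x. f x / t) \<le> 1}. ennreal t)"

definition conj_exp :: "('a \<Rightarrow> ereal) \<Rightarrow> 'a \<Rightarrow> ereal" where
  "conj_exp p x = (if p x = 1 then \<infinity> else if p x = \<infinity> then 1
     else ereal (real_of_ereal (p x) / (real_of_ereal (p x) - 1)))"

definition LH0 :: "('a \<Rightarrow> 'a \<Rightarrow> real) \<Rightarrow> ('a \<Rightarrow> ereal) \<Rightarrow> bool" where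
  "LH0 d p \<longleftrightarrow> (\<exists>C0. \<forall>x y. 0 < d x y \<and> d x y < 1/2 \<longrightarrow>
      \<bar>p x - p y\<bar> < ereal (- C0 / ln (d x y)))"

definition LHinf :: "('a \<Rightarrow> 'a \<Rightarrow> real) \<Rightarrow> ('a \<Rightarrow> ereal) \<Rightarrow> 'a \<Rightarrow> real \<Rightarrow> bool" where
  "LHinf d p x0 pinf \<longleftrightarrow> (\<exists>Cinf. \<forall>x.
      \<bar>p x - ereal pinf\<bar> < ereal (Cinf / ln (exp 1 + d x x0)))"

definition weight :: "('a \<Rightarrow> 'a \<Rightarrow> real) \<Rightarrow> 'a measure \<Rightarrow> ('a \<Rightarrow> real) \<Rightarrow> bool" where
  "weight d M w \<longleftrightarrow> w \<in> borel_measurable M \<and> (\<forall>x. 0 \<le> w x) \<and>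
     (\<forall>x r. (\<integral>\<^sup>+ y\<in>qball d x r. ennreal (w y) \<partial>M) < \<infinity>) \<and>
     (AE x in M. 0 < w x)"

definition Ap :: "('a \<Rightarrow> 'a \<Rightarrow> real) \<Rightarrow> 'a measure \<Rightarrow> ('a \<Rightarrow> ereal) \<Rightarrow> ('a \<Rightarrow> real) \<Rightarrow> bool" where
  "Ap d M p w \<longleftrightarrow> weight d M w \<and> (\<exists>K. \<forall>x r.
      vnorm M p (\<lambda>y. w y * indicator (qball d x r) y)
      * vnorm M (conj_exp p) (\<lambda>y. inverse (w y) * indicator (qball d x r) y)
      \<le> ennreal K * emeasure M (qball d x r))"

definition epowr :: "ennreal \<Rightarrow> real \<Rightarrow> ennreal" where
  "epowr t a = (if t = \<infinity> then \<infinity> else ennreal (enn2real t powr a))"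

end

theory Submission
  imports Defs
begin

lemma esssup_zero: "esssup M (\<lambda>x. (0::ennreal)) = 0"
  by (intro antisym esssup_I) auto

lemma mod_fin:
  assumes "\<And>x. p x \<noteq> \<infinity>"
  shows "modular M p f = (\<integral>\<^sup>+ x. ennreal (\<bar>f x\<bar> powr real_of_ereal (p x)) \<partial>M)"
proof -
  have "Xinf p = {}" using assms by (auto simp: Xinf_def)
  then show ?thesis by (simp add: modular_def esssup_zero)
qed

lemma vnorm_le: "t > 0 \<Longrightarrow> modular M p (\<lambda>x. f x / t) \<le> 1 \<Longrightarrow> vnorm M p f \<le> ennreal t"
  unfolding vnorm_def by (rule INF_lower) auto

lemma vnorm_less: "vnorm M p f < ennreal l \<Longrightarrow> \<exists>t. 0 < t \<and> t < l \<and> modular M p (\<lambda>x. f x / t) \<le> 1"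
  unfolding vnorm_def by (auto simp: INF_less_iff ennreal_less_iff)

locale VS =
  fixes M :: "'a measure" and p :: "'a \<Rightarrow> ereal" and w :: "'a \<Rightarrow> real" and P :: real
  assumes pfin: "\<And>x. p x \<noteq> \<infinity>"
    and p1: "\<And>x. 1 \<le> p x" and pP: "\<And>x. p x \<le> ereal P"
    and pmeas: "p \<in> borel_measurable M"
    and wmeas: "w \<in> borel_measurable M" and wnn: "\<And>x. 0 \<le> w x"
begin

definition q where "q x = real_of_ereal (p x)"

lemma q_meas[measurable]: "q \<in> borel_measurable M"
  unfolding q_def using pmeas by measurable

lemma p_eq: "p x = ereal (q x)"
  using pfin[of x] p1[of x] unfolding q_def by (cases "p x") auto

lemma w_meas[measurable]: "w \<in> borel_measurable M" by (rule wmeas)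

lemma q1: "1 \<le> q x" using p1[of x] p_eq[of x] by simp
lemma qP: "q x \<le> P" using pP[of x] p_eq[of x] by simp
lemma P1: "1 \<le> P" using q1[of undefined] qP[of undefined] by simp

definition I where "I A l = modular M p (\<lambda>y. w y * indicator A y / l)"

lemma I_eq: "l > 0 \<Longrightarrow> I A l = (\<integral>\<^sup>+ x. ennreal (indicator A x * (w x / l) powr q x) \<partial>M)"
  unfolding I_def mod_fin[OF pfin] q_def[symmetric]
  by (intro nn_integral_cong) (auto simp: indicator_def wnn)

lemma I_anti: assumes "0 < t" "t \<le> l" shows "I A l \<le> I A t"
  using assms unfolding I_eq[OF assms(1)] I_eq[OF less_le_trans[OF assms]]
  by (intro nn_integral_mono ennreal_leI mult_left_mono powr_mono2 divide_left_mono)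
     (auto simp: wnn q1 intro: order_trans[OF zero_le_one q1])

lemma I_mono_set: assumes "A \<subseteq> B" "l > 0" shows "I A l \<le> I B l"
  unfolding I_eq[OF assms(2)] using assms
  by (intro nn_integral_mono ennreal_leI mult_right_mono) (auto simp: indicator_def wnn)

lemma I_scale_up:
  assumes A: "A \<in> sets M" and a: "a \<ge> 1" and l: "l > 0"
  shows "I A (a*l) \<le> ennreal (1/a) * I A l"
proof -
  have [measurable]: "A \<in> sets M" by (rule A)
  have "I A (a*l) \<le> (\<integral>\<^sup>+ x. ennreal (1/a) * ennreal (indicator A x * (w x / l) powr q x) \<partial>M)"
    unfolding I_eq[OF mult_pos_pos[OF less_le_trans[OF zero_less_one a] l]] using a l
  proof (intro nn_integral_mono)
    fix x
    have "(w x / (a*l)) powr q x = (w x / l) powr q x / a powr q x"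
      using a l wnn[of x] by (simp add: powr_divide[symmetric] field_simps)
    also have "\<dots> \<le> (w x / l) powr q x / a"
      using a l wnn[of x] q1[of x]
      by (intro divide_left_mono) (auto intro: order_trans[of _ "a powr 1"] powr_mono)
    finally show "ennreal (indicator A x * (w x / (a * l)) powr q x)
        \<le> ennreal (1 / a) * ennreal (indicator A x * (w x / l) powr q x)"
      using a by (auto simp: indicator_def ennreal_mult[symmetric] intro!: ennreal_leI)
  qed
  also have "\<dots> = ennreal (1/a) * I A l"
    using A l unfolding I_eq[OF l] by (intro nn_integral_cmult) measurable
  finally show ?thesis .
qed

lemma I_scale_low:
  assumes A: "A \<in> sets M" and a: "a \<ge> 1" and l: "l > 0"
  shows "ennreal (a powr (-P)) * I A l \<le> I A (a*l)"
proof -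
  have [measurable]: "A \<in> sets M" by (rule A)
  have "ennreal (a powr (-P)) * I A l = (\<integral>\<^sup>+ x. ennreal (a powr (-P)) * ennreal (indicator A x * (w x / l) powr q x) \<partial>M)"
    using A l unfolding I_eq[OF l] by (intro nn_integral_cmult[symmetric]) measurable
  also have "\<dots> \<le> I A (a*l)"
    unfolding I_eq[OF mult_pos_pos[OF less_le_trans[OF zero_less_one a] l]] using a l
  proof (intro nn_integral_mono)
    fix x
    have "(w x / l) powr q x * a powr (-P) \<le> (w x / l) powr q x * a powr (- q x)"
      using a qP[of x] by (intro mult_left_mono powr_mono) auto
    also have "\<dots> = (w x / (a*l)) powr q x"
      using a l wnn[of x] by (simp add: powr_divide[symmetric] powr_minus field_simps)
    finally show "ennreal (a powr (-P)) * ennreal (indicator A x * (w x / l) powr q x)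
        \<le> ennreal (indicator A x * (w x / (a * l)) powr q x)"
      using a by (auto simp: indicator_def ennreal_mult[symmetric] mult.commute intro!: ennreal_leI)
  qed
  finally show ?thesis .
qed

end

context VS begin

lemma conj_exp_eq: "conj_exp p x = (if q x = 1 then \<infinity> else ereal (q x / (q x - 1)))"
  unfolding conj_exp_def using p_eq[of x] by (auto simp: one_ereal_def)

lemma Xinf_conj: "Xinf (conj_exp p) = {x. q x = 1}"
  unfolding Xinf_def conj_exp_eq by auto

lemma holder_core:
  assumes wpos: "AE x in M. 0 < w x"
    and E: "E \<in> sets M" and B: "B \<in> sets M" and EB: "E \<subseteq> B"
    and t: "t > 0" and s: "s > 0"
    and IE: "I E t \<le> 1"
    and IB: "modular M (conj_exp p) (\<lambda>y. inverse (w y) * indicator B y / s) \<le> 1"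
  shows "emeasure M E \<le> ennreal (2 * t * s)"
proof -
  have [measurable]: "E \<in> sets M" "B \<in> sets M" by (rule E, rule B)
  define b where "b x = inverse (w x) * indicator B x / s" for x
  define S where "S = esssup M (\<lambda>x. ennreal \<bar>b x\<bar> * indicator (Xinf (conj_exp p)) x)"
  define G where "G x = ennreal (indicator E x * (w x / t) powr q x)" for x
  define F where "F x = ennreal (indicator {x. q x \<noteq> 1} x * \<bar>b x\<bar> powr (q x / (q x - 1)))" for x
  have [measurable]: "b \<in> borel_measurable M" unfolding b_def by measurable
  have Gm[measurable]: "G \<in> borel_measurable M" unfolding G_def by measurable
  have Fm[measurable]: "F \<in> borel_measurable M" unfolding F_def by measurable
  have J: "(\<integral>\<^sup>+ x. indicator (- Xinf (conj_exp p)) x * ennreal (\<bar>b x\<bar> powr real_of_ereal (conj_exp p x)) \<partial>M)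
      = integral\<^sup>N M F"
    unfolding F_def Xinf_conj
    by (intro nn_integral_cong) (auto simp: conj_exp_eq indicator_def)
  have JS: "integral\<^sup>N M F + S \<le> 1"
    using IB unfolding modular_def J[symmetric] S_def b_def .
  have A: "integral\<^sup>N M G \<le> 1" using IE unfolding I_eq[OF t] G_def .
  have ae: "AE x in M. ennreal \<bar>b x\<bar> * indicator (Xinf (conj_exp p)) x \<le> S"
    unfolding S_def by (rule esssup_AE)
  have pw: "AE x in M. indicator E x \<le> ennreal (t * s) * ((1 + S) * G x + F x)"
    using wpos ae
  proof eventually_elim
    case (elim x)
    show ?case
    proof (cases "x \<in> E")
      case False then show ?thesis by simp
    next
      case xE: True
      then have xB: "x \<in> B" using EB by auto
      have bx: "b x = 1 / (w x * s)" using xB elim(1) s unfolding b_def by (simp add: field_simps)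
      have bnn: "0 \<le> b x" using bx elim(1) s by simp
      show ?thesis
      proof (cases "q x = 1")
        case True
        then have "ennreal (1 / (w x * s)) \<le> S"
          using elim(2) bx elim(1) s by (simp add: Xinf_conj)
        then have "ennreal (t * s) * (ennreal (1 / (w x * s)) * ennreal (w x / t))
            \<le> ennreal (t * s) * (S * ennreal (w x / t))"
          by (intro mult_left_mono mult_right_mono) auto
        moreover have "ennreal (t * s) * (ennreal (1 / (w x * s)) * ennreal (w x / t)) = 1"
          using elim(1) s t by (simp add: ennreal_mult[symmetric] field_simps)
        moreover have "ennreal (t * s) * (S * ennreal (w x / t)) \<le> ennreal (t * s) * ((1 + S) * G x + F x)"
        proof -
          have Gx: "G x = ennreal (w x / t)" unfolding G_def using xE True t wnn[of x] by simp
          have "S \<le> 1 + S" by (simp add: add_increasing)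
          then have "S * ennreal (w x / t) \<le> (1 + S) * G x" unfolding Gx by (rule mult_right_mono) simp
          also have "\<dots> \<le> (1 + S) * G x + F x" by (simp add: add_increasing2)
          finally show ?thesis by (rule mult_left_mono) simp
        qed
        ultimately show ?thesis using xE by (simp add: indicator_def)
      next
        case False
        then have q1': "q x > 1" using q1[of x] by simp
        have "(w x / t) * b x \<le> (w x / t) powr q x / q x + b x powr (q x / (q x - 1)) / (q x / (q x - 1))"
          using q1' elim(1) t s bnn
          by (intro Youngs_inequality) (auto simp: field_simps)
        also have "\<dots> \<le> (w x / t) powr q x + b x powr (q x / (q x - 1))"
          using q1' by (intro add_mono) (auto simp: field_simps intro!: divide_le_eq_1_pos[THEN iffD2] mult_le_cancel_left1[THEN iffD2] order_trans[OF _ mult_right_mono[of 1 "q x"]]  )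
        finally have le1: "(w x / t) * b x \<le> (w x / t) powr q x + b x powr (q x / (q x - 1))" .
        have eq1: "(w x / t) * b x = 1 / (t * s)" using bx elim(1) t s by (simp add: field_simps)
        have "1 \<le> (t * s) * ((w x / t) powr q x + b x powr (q x / (q x - 1)))"
          using le1 unfolding eq1 using t s by (simp add: field_simps)
        then have "ennreal 1 \<le> ennreal ((t * s) * ((w x / t) powr q x + b x powr (q x / (q x - 1))))"
          by (rule ennreal_leI)
        also have "\<dots> = ennreal (t * s) * (G x + F x)"
          using xE False unfolding G_def F_def using bnn t s
          by (simp add: ennreal_mult ennreal_plus)
        finally have "ennreal 1 \<le> ennreal (t * s) * (G x + F x)" .
        also have "\<dots> \<le> ennreal (t * s) * ((1 + S) * G x + F x)"
          by (intro mult_left_mono add_mono) (auto simp: distrib_right intro: add_increasing2)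
        finally show ?thesis using xE by simp
      qed
    qed
  qed
  have "emeasure M E = (\<integral>\<^sup>+ x. indicator E x \<partial>M)" by simp
  also have "\<dots> \<le> (\<integral>\<^sup>+ x. ennreal (t * s) * ((1 + S) * G x + F x) \<partial>M)"
    by (rule nn_integral_mono_AE[OF pw])
  also have "\<dots> = ennreal (t * s) * ((1 + S) * integral\<^sup>N M G + integral\<^sup>N M F)"
    by (simp add: nn_integral_cmult nn_integral_add)
  also have "\<dots> \<le> ennreal (t * s) * 2"
  proof (intro mult_left_mono)
    have "S * integral\<^sup>N M G \<le> S * 1"
      using A by (intro mult_left_mono) auto
    then have "(1 + S) * integral\<^sup>N M G \<le> integral\<^sup>N M G + S"
      by (simp add: distrib_right add_left_mono)
    then have "(1 + S) * integral\<^sup>N M G + integral\<^sup>N M F \<le> integral\<^sup>N M G + (integral\<^sup>N M F + S)"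
      by (simp add: add_right_mono add.assoc add.commute add.left_commute)
    also have "\<dots> \<le> 1 + 1" using A JS by (intro add_mono)
    finally show "(1 + S) * integral\<^sup>N M G + integral\<^sup>N M F \<le> 2" by simp
  qed simp
  also have "\<dots> = ennreal (2 * t * s)"
  proof -
    have "ennreal (2 * t * s) = ennreal 2 * ennreal (t * s)"
      using t s by (simp add: ennreal_mult[symmetric] mult.assoc del: ennreal_numeral)
    then show ?thesis by (simp add: mult.commute)
  qed
  finally show ?thesis .
qed

end

lemma ennreal_le_mult_realD:
  assumes "0 \<le> c" "0 \<le> b" "ennreal a \<le> ennreal c * ennreal b" shows "a \<le> c * b"
  using assms by (cases "a \<le> 0") (auto simp: ennreal_mult[symmetric] ennreal_le_iff intro: order_trans[of _ 0])

context VS begin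

definition N where "N A = vnorm M p (\<lambda>y. w y * indicator A y)"

lemma N_le: "t > 0 \<Longrightarrow> I A t \<le> 1 \<Longrightarrow> N A \<le> ennreal t"
  unfolding N_def I_def by (rule vnorm_le)

lemma N_less: assumes "N A < ennreal l" shows "I A l \<le> 1"
proof -
  obtain t where t: "0 < t" "t < l" "I A t \<le> 1"
    using vnorm_less[OF assms[unfolded N_def]] unfolding I_def by auto
  show ?thesis using I_anti[of t l A] t by auto
qed

lemma I_add: assumes "A1 \<in> sets M" "A2 \<in> sets M" "A1 \<inter> A2 = {}" "l > 0"
  shows "I (A1 \<union> A2) l = I A1 l + I A2 l"
proof -
  have [measurable]: "A1 \<in> sets M" "A2 \<in> sets M" by (rule assms)+
  have "I (A1 \<union> A2) l = (\<integral>\<^sup>+ x. ennreal (indicator A1 x * (w x / l) powr q x)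
      + ennreal (indicator A2 x * (w x / l) powr q x) \<partial>M)"
    unfolding I_eq[OF assms(4)] using assms(3)
    by (intro nn_integral_cong) (auto simp: indicator_def)
  also have "\<dots> = I A1 l + I A2 l"
    unfolding I_eq[OF assms(4)] by (rule nn_integral_add) measurable
  finally show ?thesis .
qed

lemma I_cmp_up:
  assumes A: "A \<in> sets M" and l: "l > 0" and c: "c \<ge> 0"
    and pt: "\<And>x. x \<in> A \<Longrightarrow> l powr (- q x) \<le> c"
  shows "I A l \<le> ennreal c * I A 1"
proof -
  have [measurable]: "A \<in> sets M" by (rule A)
  have "I A l \<le> (\<integral>\<^sup>+ x. ennreal c * ennreal (indicator A x * (w x / 1) powr q x) \<partial>M)"
    unfolding I_eq[OF l]
  proof (intro nn_integral_mono)
    fix x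
    show "ennreal (indicator A x * (w x / l) powr q x) \<le> ennreal c * ennreal (indicator A x * (w x / 1) powr q x)"
    proof (cases "x \<in> A")
      case True
      have "(w x / l) powr q x = w x powr q x * l powr (- q x)"
        using l wnn[of x] by (subst powr_divide) (auto simp: powr_minus divide_inverse)
      also have "\<dots> \<le> w x powr q x * c" using pt[OF True] by (intro mult_left_mono) auto
      finally show ?thesis using True c by (simp add: ennreal_mult[symmetric] mult.commute ennreal_leI)
    qed simp
  qed
  also have "\<dots> = ennreal c * I A 1"
    unfolding I_eq[OF zero_less_one] by (rule nn_integral_cmult) measurable
  finally show ?thesis .
qed

lemma I_cmp_low:
  assumes A: "A \<in> sets M" and l: "l > 0" and c: "c \<ge> 0"
    and pt: "\<And>x. x \<in> A \<Longrightarrow> c \<le> l powr (- q x)"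
  shows "ennreal c * I A 1 \<le> I A l"
proof -
  have [measurable]: "A \<in> sets M" by (rule A)
  have "ennreal c * I A 1 = (\<integral>\<^sup>+ x. ennreal c * ennreal (indicator A x * (w x / 1) powr q x) \<partial>M)"
    unfolding I_eq[OF zero_less_one] by (rule nn_integral_cmult[symmetric]) measurable
  also have "\<dots> \<le> I A l"
    unfolding I_eq[OF l]
  proof (intro nn_integral_mono)
    fix x
    show "ennreal c * ennreal (indicator A x * (w x / 1) powr q x) \<le> ennreal (indicator A x * (w x / l) powr q x)"
    proof (cases "x \<in> A")
      case True
      have "w x powr q x * c \<le> w x powr q x * l powr (- q x)" using pt[OF True] by (intro mult_left_mono) auto
      also have "\<dots> = (w x / l) powr q x"
        using l wnn[of x] by (subst powr_divide) (auto simp: powr_minus divide_inverse)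
      finally show ?thesis using True c by (simp add: ennreal_mult[symmetric] mult.commute ennreal_leI)
    qed simp
  qed
  finally show ?thesis .
qed

lemma N_fin: assumes A: "A \<in> sets M" and W: "I A 1 < \<infinity>" shows "N A < \<infinity>"
proof -
  define a where "a = max 1 (enn2real (I A 1))"
  have a: "a \<ge> 1" unfolding a_def by simp
  have IA: "I A 1 = ennreal (enn2real (I A 1))" using W by simp
  have "I A (a * 1) \<le> ennreal (1/a) * I A 1" by (rule I_scale_up[OF A a]) simp
  also have "\<dots> = ennreal (1/a * enn2real (I A 1))"
    by (subst IA) (simp add: ennreal_mult[symmetric] a_def)
  also have "\<dots> \<le> 1"
  proof -
    have "enn2real (I A 1) \<le> a" unfolding a_def by simp
    then have "1/a * enn2real (I A 1) \<le> 1" using a by (simp add: field_simps)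
    then show ?thesis by (metis ennreal_1 ennreal_leI)
  qed
  finally have "N A \<le> ennreal a" using a by (intro N_le) auto
  then show ?thesis by (simp add: le_less_trans)
qed

lemma fact1:
  assumes wpos: "AE x in M. 0 < w x"
    and K: "K \<ge> 0"
    and Ap: "N B * vnorm M (conj_exp p) (\<lambda>y. inverse (w y) * indicator B y) \<le> ennreal K * emeasure M B"
    and E: "E \<in> sets M" and B: "B \<in> sets M" and EB: "E \<subseteq> B"
    and t: "t > 0" and IE: "I E t \<le> 1"
    and mE: "0 < emeasure M E" and mB: "emeasure M B < \<infinity>"
  shows "N B \<le> ennreal (2 * t * K * enn2real (emeasure M B) / enn2real (emeasure M E))"
proof -
  define e where "e = enn2real (emeasure M E)"
  define b where "b = enn2real (emeasure M B)"
  have mEfin: "emeasure M E < \<infinity>" using emeasure_mono[OF EB B] mB by auto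
  have eE: "emeasure M E = ennreal e" using mEfin unfolding e_def by simp
  have bB: "emeasure M B = ennreal b" using mB unfolding b_def by simp
  have e: "e > 0" using mE mEfin unfolding e_def by (simp add: enn2real_positive_iff)
  have b: "b \<ge> 0" unfolding b_def by simp
  define c where "c = e / (2 * t)"
  have c: "c > 0" using e t unfolding c_def by simp
  have "ennreal c \<le> vnorm M (conj_exp p) (\<lambda>y. inverse (w y) * indicator B y)"
    unfolding vnorm_def
  proof (rule INF_greatest)
    fix s assume "s \<in> {t. 0 < t \<and> modular M (conj_exp p) (\<lambda>x. inverse (w x) * indicator B x / t) \<le> 1}"
    then have s: "s > 0" and ms: "modular M (conj_exp p) (\<lambda>x. inverse (w x) * indicator B x / s) \<le> 1" by auto
    have "ennreal e \<le> ennreal (2 * t * s)" using holder_core[OF wpos E B EB t s IE ms] eE by simp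
    then have "e \<le> 2 * t * s" using t s by (simp add: ennreal_le_iff)
    then show "ennreal c \<le> ennreal s" unfolding c_def using t by (intro ennreal_leI) (simp add: field_simps)
  qed
  then have "N B * ennreal c \<le> ennreal K * emeasure M B"
    using Ap by (meson mult_left_mono order_trans zero_le)
  also have "\<dots> = ennreal (K * b)" using K b bB by (simp add: ennreal_mult)
  finally have le: "N B * ennreal c \<le> ennreal (K * b)" .
  have "N B \<noteq> \<infinity>"
  proof
    assume "N B = \<infinity>" then show False using le c by (simp add: ennreal_mult_top top_unique)
  qed
  then obtain n where n: "N B = ennreal n" "n \<ge> 0" by (cases "N B") auto
  have "n * c \<le> K * b" using le n c K b by (simp add: ennreal_mult[symmetric] ennreal_le_iff)
  then have "n \<le> K * b / c" using c by (simp add: field_simps)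
  also have "K * b / c = 2 * t * K * b / e" unfolding c_def using e t by (simp add: field_simps)
  finally show ?thesis unfolding n(1) b_def[symmetric] e_def[symmetric] by (rule ennreal_leI)
qed

end

lemma lam_bound:
  fixes n D \<delta> \<kappa> :: real
  assumes n: "n \<ge> 1" and D: "D > 0" and k: "\<kappa> \<ge> 0" and d: "\<delta> > 0"
  shows "D * (n powr \<delta>) powr \<kappa> + 1 \<le> (D + 1) * n powr (\<delta> * \<kappa>)"
proof -
  have "(n powr \<delta>) powr \<kappa> = n powr (\<delta> * \<kappa>)" by (simp add: powr_powr)
  moreover have "1 \<le> n powr (\<delta> * \<kappa>)" using n d k by (simp add: ge_one_powr_ge_zero)
  ultimately show ?thesis by (simp add: algebra_simps)
qed

lemma real_core:
  fixes P pinf c0 D \<delta> \<kappa> n lam iS iT wS wT wB U N0 C :: real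
  assumes P: "P \<ge> 1" and pinf: "pinf > 0" and D: "D > 0" and k: "\<kappa> \<ge> 0" and d: "\<delta> > 0"
    and dk: "\<delta> * \<kappa> \<le> 1/2" and dkP: "\<delta> * \<kappa> * P \<le> pinf" and c0: "c0 \<ge> 0" and n: "n \<ge> 1"
    and lam: "lam = D * (n powr \<delta>) powr \<kappa> + 1"
    and R1: "2 powr (-P) \<le> iS + iT"
    and R2: "iS \<le> exp c0 * n powr (-pinf) * wS"
    and R3: "n \<ge> lam \<Longrightarrow> iT \<le> lam / n"
    and R4: "exp (-c0) * n powr (-pinf) * wS \<le> 2 powr P"
    and R5: "wT \<le> lam powr P"
    and R6: "wB = wS + wT" and R7: "2 powr (-P) \<le> wB"
    and nn: "wS \<ge> 0" "wT \<ge> 0"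
    and U: "U = exp c0 * 2 powr P + (D+1) powr P"
    and N0: "N0 = (2 powr (P+1) * (D+1))^2"
    and C: "C = max ((exp c0 * 2 powr (P+1)) powr (1/pinf)) (N0 * 2 powr (P/pinf))"
  shows "U powr (-1/pinf) * wB powr (1/pinf) \<le> n" and "n \<le> C * wB powr (1/pinf)"
proof -
  have npos: "n > 0" using n by simp
  have lamle: "lam \<le> (D + 1) * n powr (\<delta> * \<kappa>)" unfolding lam by (rule lam_bound[OF n D k d])
  have lam1: "lam \<ge> 1" unfolding lam using D by simp
  have wBpos: "wB > 0" using R7 by (smt (verit) powr_gt_zero)
  have Upos: "U > 0" unfolding U using D by (simp add: add_pos_nonneg)
  have wS: "wS \<le> exp c0 * 2 powr P * n powr pinf"
  proof -
    have "wS = (exp (-c0) * n powr (-pinf) * wS) * (exp c0 * n powr pinf)"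
      using npos by (simp add: powr_minus field_simps exp_minus)
    also have "\<dots> \<le> 2 powr P * (exp c0 * n powr pinf)"
      using R4 by (intro mult_right_mono) auto
    finally show ?thesis by (simp add: algebra_simps)
  qed
  have wT: "wT \<le> (D+1) powr P * n powr pinf"
  proof -
    have "wT \<le> lam powr P" by (rule R5)
    also have "\<dots> \<le> ((D + 1) * n powr (\<delta> * \<kappa>)) powr P"
      using lamle lam1 P by (intro powr_mono2) auto
    also have "\<dots> = (D+1) powr P * n powr (\<delta> * \<kappa> * P)"
      using D npos by (simp add: powr_mult powr_powr)
    also have "\<dots> \<le> (D+1) powr P * n powr pinf"
      using dkP n D by (intro mult_left_mono powr_mono) auto
    finally show ?thesis .
  qed
  have wBU: "wB \<le> U * n powr pinf" using wS wT R6 U by (simp add: algebra_simps)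
  have "wB powr (1/pinf) \<le> (U * n powr pinf) powr (1/pinf)"
    using wBU wBpos pinf by (intro powr_mono2) auto
  also have "\<dots> = U powr (1/pinf) * n"
    using Upos npos pinf by (simp add: powr_mult powr_powr)
  finally have "wB powr (1/pinf) \<le> U powr (1/pinf) * n" .
  then have "U powr (-1/pinf) * wB powr (1/pinf) \<le> U powr (-1/pinf) * (U powr (1/pinf) * n)"
    by (intro mult_left_mono) auto
  also have "\<dots> = n" using Upos by (simp add: powr_add[symmetric] mult.assoc[symmetric])
  finally show "U powr (-1/pinf) * wB powr (1/pinf) \<le> n" .
  have C1: "(exp c0 * 2 powr (P+1)) powr (1/pinf) \<le> C" and C2: "N0 * 2 powr (P/pinf) \<le> C"
    unfolding C by auto
  show "n \<le> C * wB powr (1/pinf)"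
  proof (cases "n \<ge> N0")
    case True
    have sq: "sqrt n \<ge> 2 powr (P+1) * (D+1)"
      using True N0 D by (metis abs_of_nonneg less_eq_real_def mult_pos_pos powr_gt_zero real_le_rsqrt add_pos_pos zero_less_one real_sqrt_abs)
    have two: "2 powr (P+1) \<ge> 1" using P by (simp add: ge_one_powr_ge_zero)
    have sqD: "sqrt n \<ge> D + 1" using sq two D
      by (smt (verit) mult_le_cancel_right1)
    have npow: "n powr (\<delta> * \<kappa>) \<le> sqrt n"
      using n dk by (simp add: powr_half_sqrt[symmetric] powr_mono)
    have lamsq: "lam \<le> (D+1) * sqrt n"
      using lamle npow D by (smt (verit) mult_left_mono)
    have "lam \<le> n"
    proof -
      have "(D+1) * sqrt n \<le> sqrt n * sqrt n" using sqD n by (intro mult_right_mono) auto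
      also have "\<dots> = n" using n by simp
      finally show ?thesis using lamsq by simp
    qed
    then have iT: "iT \<le> lam / n" by (rule R3)
    have "lam / n \<le> (D+1) * sqrt n / n" using lamsq npos by (simp add: divide_right_mono)
    also have "\<dots> = (D+1) / sqrt n" using npos by (simp add: field_simps real_sqrt_mult[symmetric])
    also have "\<dots> \<le> 2 powr (-P-1)"
    proof -
      have "(D+1) \<le> 2 powr (-P-1) * sqrt n"
      proof -
        have "2 powr (-P-1) * (2 powr (P+1) * (D+1)) = D + 1"
          by (simp add: mult.assoc[symmetric] powr_add[symmetric])
        then show ?thesis using sq by (smt (verit) mult_left_mono powr_ge_zero)
      qed
      then show ?thesis using npos by (simp add: field_simps)
    qed
    finally have iT2: "iT \<le> 2 powr (-P-1)" using iT by simp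
    have half: "2 powr (-P) - 2 powr (-P-1) = 2 powr (-P-1)"
      by (simp add: powr_diff powr_minus field_simps)
    have "2 powr (-P-1) \<le> iS" using R1 iT2 half by simp
    then have "2 powr (-P-1) \<le> exp c0 * n powr (-pinf) * wS" using R2 by simp
    then have "2 powr (-P-1) * (exp c0 * 2 powr (P+1)) * n powr pinf
        \<le> (exp c0 * n powr (-pinf) * wS) * (exp c0 * 2 powr (P+1)) * n powr pinf"
      by (intro mult_right_mono) auto
    moreover have "2 powr (-P-1) * (exp c0 * 2 powr (P+1)) * n powr pinf = exp c0 * n powr pinf"
      by (simp add: powr_add[symmetric] mult.assoc mult.left_commute[of "2 powr (-P-1)"])
    moreover have "(exp c0 * n powr (-pinf) * wS) * (exp c0 * 2 powr (P+1)) * n powr pinf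
        = exp c0 * ((exp c0 * 2 powr (P+1)) * wS)"
      using npos by (simp add: powr_minus field_simps)
    ultimately have "n powr pinf \<le> (exp c0 * 2 powr (P+1)) * wS" by simp
    also have "\<dots> \<le> (exp c0 * 2 powr (P+1)) * wB" using R6 nn by (intro mult_left_mono) auto
    finally have npw: "n powr pinf \<le> (exp c0 * 2 powr (P+1)) * wB" .
    have "n = (n powr pinf) powr (1/pinf)" using npos pinf by (simp add: powr_powr)
    also have "\<dots> \<le> ((exp c0 * 2 powr (P+1)) * wB) powr (1/pinf)"
      using npw pinf by (intro powr_mono2) auto
    also have "\<dots> = (exp c0 * 2 powr (P+1)) powr (1/pinf) * wB powr (1/pinf)"
      using wBpos by (simp add: powr_mult)
    also have "\<dots> \<le> C * wB powr (1/pinf)" using C1 by (intro mult_right_mono) auto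
    finally show ?thesis .
  next
    case False
    have "2 powr (-P/pinf) \<le> wB powr (1/pinf)"
    proof -
      have "(2 powr (-P)) powr (1/pinf) \<le> wB powr (1/pinf)" using R7 pinf by (intro powr_mono2) auto
      then show ?thesis by (simp add: powr_powr)
    qed
    then have "N0 * 2 powr (P/pinf) * 2 powr (-P/pinf) \<le> N0 * 2 powr (P/pinf) * wB powr (1/pinf)"
      using N0 by (intro mult_left_mono) auto
    moreover have "N0 * 2 powr (P/pinf) * 2 powr (-P/pinf) = N0"
      by (simp add: mult.assoc powr_add[symmetric])
    moreover have "N0 * 2 powr (P/pinf) * wB powr (1/pinf) \<le> C * wB powr (1/pinf)"
      using C2 by (intro mult_right_mono) auto
    ultimately show ?thesis using False by linarith
  qed
qed

lemma fin_ennreal: "(x::ennreal) \<noteq> \<infinity> \<Longrightarrow> \<exists>r\<ge>0. x = ennreal r"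
  by (cases x) auto

context VS begin

lemma N_mono: assumes "A \<subseteq> B" shows "N A \<le> N B"
  unfolding N_def vnorm_def
proof (rule INF_superset_mono)
  show "{t. 0 < t \<and> modular M p (\<lambda>x. w x * indicator B x / t) \<le> 1}
      \<subseteq> {t. 0 < t \<and> modular M p (\<lambda>x. w x * indicator A x / t) \<le> 1}"
    using I_mono_set[OF assms] unfolding I_def by (auto intro: order_trans)
qed simp

lemma W_eq: "(\<integral>\<^sup>+ y\<in>A. ennreal (w y powr real_of_ereal (p y)) \<partial>M) = I A 1"
  unfolding I_eq[OF zero_less_one] q_def
  by (intro nn_integral_cong) (auto simp: indicator_def)

lemma infinite_case:
  assumes B: "B \<in> sets M" and NB: "N B = \<infinity>" and C: "C > 0"
  shows "ennreal c * epowr (I B 1) e \<le> N B \<and> N B \<le> ennreal C * epowr (I B 1) e"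
proof -
  have "I B 1 = \<infinity>"
  proof (rule ccontr)
    assume "I B 1 \<noteq> \<infinity>"
    then have "I B 1 < \<infinity>" by (simp add: less_top)
    then show False using N_fin[OF B] NB by simp
  qed
  then show ?thesis using NB C by (simp add: epowr_def ennreal_mult_top)
qed

lemma main_bdd:
  assumes pinf: "pinf \<le> 0" and N1: "N1 \<ge> 1" and bnd: "\<And>B. B \<in> sets M \<Longrightarrow> N B \<le> ennreal N1"
  shows "\<exists>c C. c > 0 \<and> C > 0 \<and> (\<forall>B\<in>sets M. 1 \<le> N B \<longrightarrow> N B < \<infinity> \<longrightarrow>
     ennreal c * epowr (I B 1) (1/pinf) \<le> N B \<and> N B \<le> ennreal C * epowr (I B 1) (1/pinf))"
proof -
  define e where "e = 1 / pinf"
  have e: "e \<le> 0" unfolding e_def using pinf by (simp add: divide_nonpos_nonneg)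
  define a where "a = 2 powr (-P)"
  define b where "b = 2 powr P * N1 powr P"
  have a: "a > 0" unfolding a_def by simp
  have b: "b > 0" unfolding b_def using N1 by simp
  define c where "c = 1 / a powr e"
  define C where "C = N1 / b powr e"
  have cpos: "c > 0" unfolding c_def using a by simp
  have Cpos: "C > 0" unfolding C_def using b N1 by simp
  show ?thesis
  proof (rule exI[of _ c], rule exI[of _ C], intro conjI[OF cpos] conjI[OF Cpos] ballI impI)
    fix B assume B: "B \<in> sets M" and N1B: "1 \<le> N B" and Nfin: "N B < \<infinity>"
    have "N B \<noteq> \<infinity>" using Nfin by simp
    then obtain n where Nn: "N B = ennreal n" and n0: "n \<ge> 0" using fin_ennreal[of "N B"] by auto
    have n: "n \<ge> 1" using N1B Nn n0 by (metis ennreal_1 ennreal_le_iff zero_le_one)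
    have npos: "n > 0" using n by simp
    have nN1: "n \<le> N1" using bnd[OF B] Nn N1 by (simp add: ennreal_le_iff)
    have a1: "I B (2 * n) \<le> 1" using npos by (intro N_less) (simp add: Nn ennreal_less_iff)
    have b1: "1 < I B (n/2)"
    proof (rule ccontr)
      assume "\<not> 1 < I B (n/2)"
      then have "N B \<le> ennreal (n/2)" using npos by (intro N_le) auto
      then show False using npos Nn by (simp add: ennreal_le_iff)
    qed
    have "ennreal (2 powr (-P)) * I B (n/2) \<le> I B (2 * (n/2))"
      using npos by (intro I_scale_low[OF B]) auto
    moreover have "ennreal (2 powr (-P)) * 1 \<le> ennreal (2 powr (-P)) * I B (n/2)"
      using b1 by (intro mult_left_mono) auto
    ultimately have c1: "ennreal (2 powr (-P)) \<le> I B n" by simp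
    have "ennreal (2 powr (-P)) * I B n \<le> I B (2 * n)"
      using npos by (intro I_scale_low[OF B]) auto
    then have d1: "ennreal (2 powr (-P)) * I B n \<le> 1" using a1 by simp
    have IBnfin: "I B n \<noteq> \<infinity>"
    proof
      assume "I B n = \<infinity>" then show False using d1 by (simp add: ennreal_mult_top top_unique)
    qed
    obtain iB where iB: "I B n = ennreal iB" "iB \<ge> 0" using fin_ennreal[OF IBnfin] by auto
    have "ennreal (n powr (-P)) * I B 1 \<le> I B (n * 1)" using n by (intro I_scale_low[OF B]) auto
    then have e1: "ennreal (n powr (-P)) * I B 1 \<le> ennreal iB" using iB by simp
    have IB1fin: "I B 1 \<noteq> \<infinity>"
    proof
      assume "I B 1 = \<infinity>" then show False using e1 npos by (simp add: ennreal_mult_top top_unique)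
    qed
    obtain wB where wB: "I B 1 = ennreal wB" "wB \<ge> 0" using fin_ennreal[OF IB1fin] by auto
    have "I B n \<le> I B 1" using n by (intro I_anti) auto
    then have iBwB: "iB \<le> wB" using iB wB by (simp add: ennreal_le_iff)
    have R7': "2 powr (-P) \<le> iB" using c1 iB by (simp add: ennreal_le_iff)
    have iBP: "iB \<le> 2 powr P"
    proof -
      have "ennreal (2 powr (-P) * iB) \<le> 1" using d1 iB by (simp add: ennreal_mult)
      then have "2 powr (-P) * iB \<le> 1" by (simp add: ennreal_le_1)
      then show ?thesis by (simp add: powr_minus field_simps)
    qed
    have "n powr (-P) * wB \<le> iB" using e1 wB iB by (simp add: ennreal_mult[symmetric] ennreal_le_iff)
    then have "wB \<le> n powr P * iB" using npos by (simp add: powr_minus field_simps)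
    also have "\<dots> \<le> N1 powr P * 2 powr P"
      using nN1 n iBP iB P1 by (intro mult_mono powr_mono2) auto
    finally have wBb: "wB \<le> b" unfolding b_def by (simp add: mult.commute)
    have wBa: "a \<le> wB" unfolding a_def using R7' iBwB by simp
    have wBpos: "wB > 0" using wBa a by simp
    have ep: "epowr (I B 1) (1/pinf) = ennreal (wB powr e)"
      unfolding epowr_def wB e_def using wB(2) by simp
    have up: "wB powr e \<le> a powr e" using wBa a e by (intro powr_mono2') auto
    have lo: "b powr e \<le> wB powr e" using wBb wBpos e by (intro powr_mono2') auto
    have g1: "c * wB powr e \<le> n"
    proof -
      have "c * wB powr e \<le> c * a powr e" using up cpos by (intro mult_left_mono) auto
      also have "\<dots> = 1" unfolding c_def using a by simp
      finally show ?thesis using n by simp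
    qed
    have g2: "n \<le> C * wB powr e"
    proof -
      have "n \<le> N1" by (rule nN1)
      also have "\<dots> = C * b powr e" unfolding C_def using b by simp
      also have "\<dots> \<le> C * wB powr e" using lo Cpos by (intro mult_left_mono) auto
      finally show ?thesis .
    qed
    have G1: "ennreal c * epowr (I B 1) (1/pinf) \<le> N B"
      unfolding ep Nn using g1 cpos by (simp add: ennreal_mult[symmetric] ennreal_leI)
    have G2: "N B \<le> ennreal C * epowr (I B 1) (1/pinf)"
      unfolding ep Nn using g2 Cpos by (simp add: ennreal_mult[symmetric] ennreal_leI)
    from G1 G2 show "ennreal c * epowr (I B 1) (1/pinf) \<le> N B \<and> N B \<le> ennreal C * epowr (I B 1) (1/pinf)" by simp
  qed
qed

end

lemma lh_pt:
  fixes n \<delta> Cinf R dd qx pinf :: real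
  assumes n: "n \<ge> 1" and d: "\<delta> > 0" and R: "R = n powr \<delta>" and Rd: "R \<le> dd"
    and lh: "\<bar>qx - pinf\<bar> * ln (exp 1 + dd) \<le> Cinf"
  shows "exp (-(Cinf/\<delta>)) * n powr (-pinf) \<le> n powr (-qx)"
    and "n powr (-qx) \<le> exp (Cinf/\<delta>) * n powr (-pinf)"
proof -
  have npos: "n > 0" using n by simp
  have ln0: "ln n \<ge> 0" using n by simp
  have Rpos: "R > 0" unfolding R using npos by simp
  have lnR: "ln R = \<delta> * ln n" unfolding R using npos by (simp add: ln_powr)
  have e0: "0 < exp (1::real)" by simp
  have "ln R \<le> ln (exp 1 + dd)" by (subst ln_le_cancel_iff) (use Rpos Rd e0 in linarith)+
  then have "\<bar>qx - pinf\<bar> * (\<delta> * ln n) \<le> \<bar>qx - pinf\<bar> * ln (exp 1 + dd)"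
    unfolding lnR by (intro mult_left_mono) auto
  then have "\<bar>qx - pinf\<bar> * (\<delta> * ln n) \<le> Cinf" using lh by linarith
  then have "\<bar>qx - pinf\<bar> * ln n \<le> Cinf / \<delta>" using d by (simp add: field_simps)
  then have b: "\<bar>(pinf - qx) * ln n\<bar> \<le> Cinf / \<delta>" using ln0 by (simp add: abs_mult abs_minus_commute)
  have eq: "n powr (-qx) = n powr (-pinf) * exp ((pinf - qx) * ln n)"
    using npos by (simp add: powr_def exp_add[symmetric] algebra_simps)
  have e1: "exp ((pinf - qx) * ln n) \<le> exp (Cinf/\<delta>)" using b by simp
  have e2: "exp (-(Cinf/\<delta>)) \<le> exp ((pinf - qx) * ln n)" using b by simp
  show "exp (-(Cinf/\<delta>)) * n powr (-pinf) \<le> n powr (-qx)"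
    unfolding eq using e2 by (simp add: mult.commute mult_left_mono)
  show "n powr (-qx) \<le> exp (Cinf/\<delta>) * n powr (-pinf)"
    unfolding eq using mult_left_mono[OF e1, of "n powr (-pinf)"] by (simp add: mult.commute)
qed


context VS begin

lemma main_est:
  fixes d :: "'a \<Rightarrow> 'a \<Rightarrow> real" and x0 :: 'a and pinf Cinf D \<kappa> :: real
  assumes pinf: "pinf > 0" and Cinf: "Cinf > 0"
    and LH: "\<And>x. \<bar>q x - pinf\<bar> * ln (exp 1 + d x0 x) \<le> Cinf"
    and balls: "\<And>R. qball d x0 R \<in> sets M"
    and D: "D > 0" and k: "\<kappa> \<ge> 0"
    and Psi: "\<And>R. R \<ge> 1 \<Longrightarrow> N (qball d x0 R) \<le> ennreal (D * R powr \<kappa>)"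
  shows "\<exists>c C. c > 0 \<and> C > 0 \<and> (\<forall>B\<in>sets M. 1 \<le> N B \<longrightarrow> N B < \<infinity> \<longrightarrow>
     ennreal c * epowr (I B 1) (1/pinf) \<le> N B \<and> N B \<le> ennreal C * epowr (I B 1) (1/pinf))"
proof -
  define \<delta> where "\<delta> = min (1/(2*(\<kappa>+1))) (pinf/((\<kappa>+1)*P))"
  have P: "P \<ge> 1" by (rule P1)
  have d: "\<delta> > 0" unfolding \<delta>_def using k pinf P by simp
  have dk: "\<delta> * \<kappa> \<le> 1/2"
  proof -
    have "\<delta> * \<kappa> \<le> 1/(2*(\<kappa>+1)) * \<kappa>" unfolding \<delta>_def using k by (intro mult_right_mono) auto
    also have "\<dots> \<le> 1/2" using k by (simp add: field_simps)
    finally show ?thesis .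
  qed
  have dkP: "\<delta> * \<kappa> * P \<le> pinf"
  proof -
    have "\<delta> \<le> pinf/((\<kappa>+1)*P)" unfolding \<delta>_def by simp
    then have "\<delta> * ((\<kappa>+1)*P) \<le> pinf" using P k by (simp add: pos_le_divide_eq)
    moreover have "\<delta> * \<kappa> * P \<le> \<delta> * ((\<kappa>+1)*P)" using d P by (simp add: algebra_simps)
    ultimately show ?thesis by linarith
  qed
  define c0 where "c0 = Cinf / \<delta>"
  have c0: "c0 \<ge> 0" unfolding c0_def using Cinf d by simp
  define U where "U = exp c0 * 2 powr P + (D+1) powr P"
  define N0 where "N0 = (2 powr (P+1) * (D+1))^2"
  define C where "C = max ((exp c0 * 2 powr (P+1)) powr (1/pinf)) (N0 * 2 powr (P/pinf))"
  define c where "c = U powr (-1/pinf)"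
  have Upos: "U > 0" unfolding U_def using D by (simp add: add_pos_nonneg)
  have cpos: "c > 0" unfolding c_def using Upos by simp
  have Cpos: "C > 0" unfolding C_def by (simp add: less_max_iff_disj)
  show ?thesis
  proof (rule exI[of _ c], rule exI[of _ C], intro conjI[OF cpos] conjI[OF Cpos] ballI impI)
    fix B assume B: "B \<in> sets M" and N1: "1 \<le> N B" and Nfin: "N B < \<infinity>"
    have "N B \<noteq> \<infinity>" using Nfin by simp
    then obtain n where Nn: "N B = ennreal n" and n0: "n \<ge> 0" using fin_ennreal[of "N B"] by auto
    have n: "n \<ge> 1" using N1 Nn n0 by (metis ennreal_1 ennreal_le_iff zero_le_one)
    have npos: "n > 0" using n by simp
    define R where "R = n powr \<delta>"
    have R1: "R \<ge> 1" unfolding R_def using n d by (simp add: ge_one_powr_ge_zero)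
    define BR where "BR = qball d x0 R"
    have BR: "BR \<in> sets M" unfolding BR_def by (rule balls)
    define S where "S = B - BR"
    define T where "T = B \<inter> BR"
    have S: "S \<in> sets M" and T: "T \<in> sets M" unfolding S_def T_def using B BR by auto
    have BST: "B = S \<union> T" "S \<inter> T = {}" unfolding S_def T_def by auto
    define lam where "lam = D * R powr \<kappa> + 1"
    have lam1: "lam \<ge> 1" unfolding lam_def using D by simp
    have lampos: "lam > 0" using lam1 by simp
    have a: "I B (2 * n) \<le> 1" using npos by (intro N_less) (simp add: Nn ennreal_less_iff)
    have b: "1 < I B (n/2)"
    proof (rule ccontr)
      assume "\<not> 1 < I B (n/2)"
      then have "N B \<le> ennreal (n/2)" using npos by (intro N_le) auto
      then show False using npos Nn by (simp add: ennreal_le_iff)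
    qed
    have "ennreal (2 powr (-P)) * I B (n/2) \<le> I B (2 * (n/2))"
      using npos by (intro I_scale_low[OF B]) auto
    moreover have "ennreal (2 powr (-P)) * 1 \<le> ennreal (2 powr (-P)) * I B (n/2)"
      using b by (intro mult_left_mono) auto
    ultimately have c1: "ennreal (2 powr (-P)) \<le> I B n" by simp
    have "ennreal (2 powr (-P)) * I B n \<le> I B (2 * n)"
      using npos by (intro I_scale_low[OF B]) auto
    then have d1: "ennreal (2 powr (-P)) * I B n \<le> 1" using a by simp
    have IBnfin: "I B n \<noteq> \<infinity>"
    proof
      assume "I B n = \<infinity>" then show False using d1 by (simp add: ennreal_mult_top top_unique)
    qed
    obtain iB where iB: "I B n = ennreal iB" "iB \<ge> 0" using fin_ennreal[OF IBnfin] by auto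
    have "ennreal (n powr (-P)) * I B 1 \<le> I B (n * 1)" using n by (intro I_scale_low[OF B]) auto
    then have e1: "ennreal (n powr (-P)) * I B 1 \<le> ennreal iB" using iB by simp
    have IB1fin: "I B 1 \<noteq> \<infinity>"
    proof
      assume "I B 1 = \<infinity>" then show False using e1 npos by (simp add: ennreal_mult_top top_unique)
    qed
    obtain wB where wB: "I B 1 = ennreal wB" "wB \<ge> 0" using fin_ennreal[OF IB1fin] by auto
    have "I B n \<le> I B 1" using n by (intro I_anti) auto
    then have iBwB: "iB \<le> wB" using iB wB by (simp add: ennreal_le_iff)
    have R7': "2 powr (-P) \<le> iB" using c1 iB by (simp add: ennreal_le_iff)
    have iBP: "iB \<le> 2 powr P"
    proof -
      have "ennreal (2 powr (-P) * iB) \<le> 1" using d1 iB by (simp add: ennreal_mult)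
      then have "2 powr (-P) * iB \<le> 1" by (simp add: ennreal_le_1)
      then show ?thesis by (simp add: powr_minus field_simps)
    qed
    have splitB: "I B l = I S l + I T l" if "l > 0" for l
      using I_add[OF S T BST(2) that] BST(1) by simp
    have "I S 1 \<le> I B 1" "I T 1 \<le> I B 1" "I S n \<le> I B n" "I T n \<le> I B n"
      using BST npos by (auto intro!: I_mono_set)
    then have fins: "I S 1 \<noteq> \<infinity>" "I T 1 \<noteq> \<infinity>" "I S n \<noteq> \<infinity>" "I T n \<noteq> \<infinity>"
      using wB iB by (auto simp: top_unique)
    obtain wS where wS: "I S 1 = ennreal wS" "wS \<ge> 0" using fin_ennreal[OF fins(1)] by auto
    obtain wT where wT: "I T 1 = ennreal wT" "wT \<ge> 0" using fin_ennreal[OF fins(2)] by auto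
    obtain iS where iS: "I S n = ennreal iS" "iS \<ge> 0" using fin_ennreal[OF fins(3)] by auto
    obtain iT where iT: "I T n = ennreal iT" "iT \<ge> 0" using fin_ennreal[OF fins(4)] by auto
    have R6: "wB = wS + wT" using splitB[of 1] wB wS wT by (simp add: ennreal_plus[symmetric] del: ennreal_plus)
    have iBsum: "iB = iS + iT" using splitB[of n] npos iB iS iT by (simp add: ennreal_plus[symmetric] del: ennreal_plus)
    have R1': "2 powr (-P) \<le> iS + iT" using R7' iBsum by simp
    have ptS: "exp (-c0) * n powr (-pinf) \<le> n powr (-q x) \<and> n powr (-q x) \<le> exp c0 * n powr (-pinf)"
      if "x \<in> S" for x
    proof -
      have "R \<le> d x0 x" using that unfolding S_def BR_def qball_def by auto
      then show ?thesis using lh_pt[OF n d R_def _ LH[of x]] unfolding c0_def by auto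
    qed
    have "I S n \<le> ennreal (exp c0 * n powr (-pinf)) * I S 1"
      using ptS by (intro I_cmp_up[OF S npos]) auto
    then have R2: "iS \<le> exp c0 * n powr (-pinf) * wS"
      using iS wS by (intro ennreal_le_mult_realD) auto
    have "ennreal (exp (-c0) * n powr (-pinf)) * I S 1 \<le> I S n"
      using ptS by (intro I_cmp_low[OF S npos]) auto
    then have "exp (-c0) * n powr (-pinf) * wS \<le> iS"
      using iS wS by (simp add: ennreal_mult[symmetric] ennreal_le_iff)
    then have R4: "exp (-c0) * n powr (-pinf) * wS \<le> 2 powr P" using iBsum iT iBP by linarith
    have "N BR \<le> ennreal (D * R powr \<kappa>)" unfolding BR_def by (rule Psi[OF R1])
    also have "\<dots> < ennreal lam" unfolding lam_def using D
      by (subst ennreal_less_iff) auto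
    finally have IBR: "I BR lam \<le> 1" by (rule N_less)
    have "ennreal (lam powr (-P)) * I BR 1 \<le> I BR (lam * 1)" using lam1 by (intro I_scale_low[OF BR]) auto
    then have "ennreal (lam powr (-P)) * I BR 1 \<le> 1" using IBR by simp
    moreover have "I T 1 \<le> I BR 1" unfolding T_def by (intro I_mono_set) auto
    ultimately have "ennreal (lam powr (-P)) * ennreal wT \<le> 1"
    proof -
      assume h1: "ennreal (lam powr (-P)) * I BR 1 \<le> 1" and h2: "I T 1 \<le> I BR 1"
      have "ennreal (lam powr (-P)) * I T 1 \<le> ennreal (lam powr (-P)) * I BR 1"
        using h2 by (rule mult_left_mono) simp
      then show ?thesis using h1 wT(1) by simp
    qed
    then have "lam powr (-P) * wT \<le> 1" using wT by (simp add: ennreal_mult[symmetric] ennreal_le_1)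
    then have R5: "wT \<le> lam powr P" using lampos by (simp add: powr_minus field_simps)
    have R3: "iT \<le> lam / n" if nl: "n \<ge> lam"
    proof -
      have "I T n \<le> I BR n" unfolding T_def using npos by (intro I_mono_set) auto
      also have "I BR n = I BR ((n / lam) * lam)" using lampos by simp
      also have "\<dots> \<le> ennreal (1 / (n/lam)) * I BR lam"
        using nl lampos by (intro I_scale_up[OF BR]) (auto simp: field_simps)
      also have "\<dots> \<le> ennreal (1 / (n/lam)) * 1" using IBR by (intro mult_left_mono) auto
      finally have "ennreal iT \<le> ennreal (lam / n)" using iT by simp
      then show ?thesis using npos lampos by (simp add: ennreal_le_iff)
    qed
    have core: "U powr (-1/pinf) * wB powr (1/pinf) \<le> n" "n \<le> C * wB powr (1/pinf)"
      using real_core[OF P pinf D k d dk dkP c0 n lam_def[unfolded R_def] R1' R2 R3 R4 R5 R6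
          iBwB[THEN order_trans[OF R7']] wS(2) wT(2) U_def N0_def C_def] by auto
    have ep: "epowr (I B 1) (1/pinf) = ennreal (wB powr (1/pinf))"
      unfolding epowr_def wB using wB(2) by simp
    have g1: "ennreal c * epowr (I B 1) (1/pinf) \<le> N B"
      unfolding ep Nn using core(1) cpos by (simp add: ennreal_mult[symmetric] c_def ennreal_leI)
    have g2: "N B \<le> ennreal C * epowr (I B 1) (1/pinf)"
      unfolding ep Nn using core(2) Cpos by (simp add: ennreal_mult[symmetric] ennreal_leI)
    from g1 g2 show "ennreal c * epowr (I B 1) (1/pinf) \<le> N B \<and> N B \<le> ennreal C * epowr (I B 1) (1/pinf)" by simp
  qed
qed

end

lemma doubling_pow:
  assumes dbl: "\<And>r. r > 0 \<Longrightarrow> emeasure M (qball d x (2*r)) \<le> ennreal C1 * emeasure M (qball d x r)"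
    and C1: "C1 \<ge> 1"
  shows "emeasure M (qball d x (2^n)) \<le> ennreal (C1^n) * emeasure M (qball d x 1)"
proof (induction n)
  case 0 then show ?case by simp
next
  case (Suc n)
  have "emeasure M (qball d x (2^Suc n)) = emeasure M (qball d x (2 * 2^n))" by simp
  also have "\<dots> \<le> ennreal C1 * emeasure M (qball d x (2^n))" by (rule dbl) simp
  also have "\<dots> \<le> ennreal C1 * (ennreal (C1^n) * emeasure M (qball d x 1))"
    using Suc by (rule mult_left_mono) simp
  also have "\<dots> = ennreal (C1^Suc n) * emeasure M (qball d x 1)"
    using C1 by (simp add: ennreal_mult mult.assoc)
  finally show ?case .
qed

lemma qball_mono: "r \<le> s \<Longrightarrow> qball d x r \<subseteq> qball d x s"
  unfolding qball_def by auto

lemma doubling_growth: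
  assumes dbl: "\<And>r. r > 0 \<Longrightarrow> emeasure M (qball d x (2*r)) \<le> ennreal C1 * emeasure M (qball d x r)"
    and C1: "C1 \<ge> 1" and balls: "\<And>r. qball d x r \<in> sets M" and R: "R \<ge> 1"
  shows "emeasure M (qball d x R) \<le> ennreal (C1 * R powr (log 2 C1)) * emeasure M (qball d x 1)"
proof -
  define n where "n = nat \<lceil>log 2 R\<rceil>"
  have l0: "log 2 R \<ge> 0" using R by simp
  have nl: "real n \<ge> log 2 R" unfolding n_def using l0 by linarith
  have nu: "real n \<le> log 2 R + 1" unfolding n_def using l0 by linarith
  have "R = 2 powr (log 2 R)" using R by simp
  also have "\<dots> \<le> 2 powr (real n)" using nl by (intro powr_mono) auto
  also have "\<dots> = 2^n" by (simp add: powr_realpow)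
  finally have R2: "R \<le> 2^n" .
  have "emeasure M (qball d x R) \<le> emeasure M (qball d x (2^n))"
    by (intro emeasure_mono qball_mono R2 balls)
  also have "\<dots> \<le> ennreal (C1^n) * emeasure M (qball d x 1)" by (rule doubling_pow[OF dbl C1])
  also have "\<dots> \<le> ennreal (C1 * R powr (log 2 C1)) * emeasure M (qball d x 1)"
  proof (intro mult_right_mono ennreal_leI)
    have "C1^n = C1 powr (real n)" using C1 by (simp add: powr_realpow)
    also have "\<dots> \<le> C1 powr (log 2 R + 1)" using nu C1 by (intro powr_mono) auto
    also have "\<dots> = C1 * C1 powr (log 2 R)" using C1 by (simp add: powr_add)
    also have "C1 powr (log 2 R) = R powr (log 2 C1)"
      using C1 R by (simp add: powr_def log_def field_simps)
    finally show "C1^n \<le> C1 * R powr (log 2 C1)" .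
  qed simp
  finally show ?thesis .
qed

theorem corollary3p5:
  fixes d :: "'a \<Rightarrow> 'a \<Rightarrow> real" and M :: "'a measure" and p :: "'a \<Rightarrow> ereal"
    and w :: "'a \<Rightarrow> real" and x0 :: 'a and pinf :: real
  assumes "homogeneous_type d M"
    and "exponent M p"
    and "LH0 d p" and "LHinf d p x0 pinf"
    and "Ap d M p w"
  shows "\<exists>c C. c > 0 \<and> C > 0 \<and> (\<forall>x r. r > 0 \<longrightarrow>
           vnorm M p (\<lambda>y. w y * indicator (qball d x r) y) \<ge> 1 \<longrightarrow>
           (let WB = (\<integral>\<^sup>+ y\<in>qball d x r. ennreal (w y powr real_of_ereal (p y)) \<partial>M)
            in ennreal c * epowr WB (1 / pinf)
                 \<le> vnorm M p (\<lambda>y. w y * indicator (qball d x r) y)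
             \<and> vnorm M p (\<lambda>y. w y * indicator (qball d x r) y)
                 \<le> ennreal C * epowr WB (1 / pinf)))"
proof -
  obtain A0 Cmu where qm: "quasi_metric d A0" and sM: "sets M = sigma_sets UNIV ({qball d x r | x r. True} \<union> {U. qopen d U})"
    and dbl0: "\<forall>x r. r > 0 \<longrightarrow> 0 < emeasure M (qball d x (2*r)) \<and>
        emeasure M (qball d x (2*r)) \<le> ennreal Cmu * emeasure M (qball d x r) \<and>
        emeasure M (qball d x r) < \<infinity>"
    using assms(1) unfolding homogeneous_type_def by blast
  have balls: "\<And>x r. qball d x r \<in> sets M" unfolding sM by (rule sigma_sets.Basic) blast
  have A0: "A0 \<ge> 1" and dnn: "\<And>x y. d x y \<ge> 0" and dxx: "\<And>x. d x x = 0"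
    and dsym: "\<And>x y. d x y = d y x" and tri: "\<And>x y z. d x y \<le> A0 * (d x z + d z y)"
    using qm unfolding quasi_metric_def by auto
  have pm: "p \<in> borel_measurable M" and p1: "\<And>x. 1 \<le> p x" using assms(2) unfolding exponent_def by auto
  obtain Cinf where LHc: "\<And>x. \<bar>p x - ereal pinf\<bar> < ereal (Cinf / ln (exp 1 + d x x0))"
    using assms(4) unfolding LHinf_def by blast
  have lnge: "1 \<le> ln (exp 1 + d x x0)" for x
  proof -
    have "ln (exp 1) \<le> ln (exp 1 + d x x0)" using dnn[of x x0] by (subst ln_le_cancel_iff) (auto intro: add_pos_nonneg)
    then show ?thesis by simp
  qed
  have pfin: "p x \<noteq> \<infinity>" for x
  proof
    assume "p x = \<infinity>" then show False using LHc[of x] by simp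
  qed
  define qq where "qq x = real_of_ereal (p x)" for x
  have peq: "p x = ereal (qq x)" for x using pfin[of x] p1[of x] unfolding qq_def by (cases "p x") auto
  have qb: "\<bar>qq x - pinf\<bar> < Cinf / ln (exp 1 + d x x0)" for x using LHc[of x] unfolding peq by simp
  have Cinf: "Cinf > 0" using qb[of x0] dxx[of x0] by simp
  have qq1: "1 \<le> qq x" for x using p1[of x] unfolding peq by simp
  have CL: "Cinf / ln (exp 1 + d x x0) \<le> Cinf" for x
    using lnge[of x] Cinf by (simp add: divide_le_eq)
  have qP: "qq x \<le> pinf + Cinf" for x using qb[of x] CL[of x] by linarith
  obtain K where wt: "weight d M w" and Kb: "\<And>x r. vnorm M p (\<lambda>y. w y * indicator (qball d x r) y)
      * vnorm M (conj_exp p) (\<lambda>y. inverse (w y) * indicator (qball d x r) y)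
      \<le> ennreal K * emeasure M (qball d x r)"
    using assms(5) unfolding Ap_def by blast
  have wm: "w \<in> borel_measurable M" and wnn: "\<And>x. 0 \<le> w x" and wpos: "AE x in M. 0 < w x"
    using wt unfolding weight_def by auto
  interpret V: VS M p w "pinf + Cinf"
    by unfold_locales (auto simp: pfin pm wm wnn peq qP qq1)
  have Vq: "V.q x = qq x" for x unfolding V.q_def qq_def ..
  define K1 where "K1 = max K 1"
  have K1: "K1 \<ge> 0" "K1 \<ge> 1" unfolding K1_def by auto
  have Ap1: "V.N (qball d x r) * vnorm M (conj_exp p) (\<lambda>y. inverse (w y) * indicator (qball d x r) y)
      \<le> ennreal K1 * emeasure M (qball d x r)" for x r
  proof -
    have "ennreal K * emeasure M (qball d x r) \<le> ennreal K1 * emeasure M (qball d x r)"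
      unfolding K1_def by (intro mult_right_mono ennreal_leI) auto
    then show ?thesis using Kb[of x r] unfolding V.N_def by (rule order_trans[rotated])
  qed
  define C1 where "C1 = max Cmu 1"
  have C1: "C1 \<ge> 1" unfolding C1_def by simp
  have dbl: "emeasure M (qball d x (2*r)) \<le> ennreal C1 * emeasure M (qball d x r)" if "r > 0" for x r
  proof -
    have "emeasure M (qball d x (2*r)) \<le> ennreal Cmu * emeasure M (qball d x r)" using dbl0 that by blast
    also have "\<dots> \<le> ennreal C1 * emeasure M (qball d x r)"
      unfolding C1_def by (intro mult_right_mono ennreal_leI) auto
    finally show ?thesis .
  qed
  have mpos: "0 < emeasure M (qball d x r)" if "r > 0" for x r
    using dbl0 that by (metis half_gt_zero nonzero_mult_div_cancel_left times_divide_eq_right zero_neq_numeral)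
  have mfin: "emeasure M (qball d x r) < \<infinity>" if "r > 0" for x r using dbl0 that by blast
  have LHV: "\<bar>V.q x - pinf\<bar> * ln (exp 1 + d x0 x) \<le> Cinf" for x
  proof -
    have L: "ln (exp 1 + d x x0) > 0" using lnge[of x] by simp
    have "\<bar>qq x - pinf\<bar> * ln (exp 1 + d x x0) < Cinf" using qb[of x] L by (simp add: less_divide_eq)
    then show ?thesis unfolding Vq dsym[of x0 x] by simp
  qed
  have finish: "?thesis" if c: "c > 0" and C: "C > 0"
    and H: "\<And>x r. r > 0 \<Longrightarrow> 1 \<le> V.N (qball d x r) \<Longrightarrow> V.N (qball d x r) < \<infinity> \<Longrightarrow>
       ennreal c * epowr (V.I (qball d x r) 1) (1/pinf) \<le> V.N (qball d x r) \<and>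
       V.N (qball d x r) \<le> ennreal C * epowr (V.I (qball d x r) 1) (1/pinf)" for c C
  proof (rule exI[of _ c], rule exI[of _ C], intro conjI[OF c] conjI[OF C] allI impI)
    fix x r assume r: "r > 0" and N1: "1 \<le> vnorm M p (\<lambda>y. w y * indicator (qball d x r) y)"
    have key: "ennreal c * epowr (V.I (qball d x r) 1) (1/pinf) \<le> V.N (qball d x r) \<and>
       V.N (qball d x r) \<le> ennreal C * epowr (V.I (qball d x r) 1) (1/pinf)"
    proof (cases "V.N (qball d x r) = \<infinity>")
      case True then show ?thesis by (rule V.infinite_case[OF balls _ C])
    next
      case False
      then show ?thesis using H[OF r] N1 unfolding V.N_def by (simp add: less_top)
    qed
    show "let WB = (\<integral>\<^sup>+ y\<in>qball d x r. ennreal (w y powr real_of_ereal (p y)) \<partial>M)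
            in ennreal c * epowr WB (1 / pinf)
                 \<le> vnorm M p (\<lambda>y. w y * indicator (qball d x r) y)
             \<and> vnorm M p (\<lambda>y. w y * indicator (qball d x r) y)
                 \<le> ennreal C * epowr WB (1 / pinf)"
      using key unfolding Let_def V.W_eq V.N_def .
  qed
  show ?thesis
  proof (cases "\<exists>y r. r > 0 \<and> V.N (qball d y r) < \<infinity>")
    case False
    show ?thesis by (rule finish[of 1 1]) (use False in auto)
  next
    case True
    then obtain y r0 where r0: "r0 > 0" and Nfin: "V.N (qball d y r0) < \<infinity>" by blast
    have getl: "\<exists>l>0. V.I A l \<le> 1" if "V.N A < \<infinity>" for A
    proof -
      define l where "l = enn2real (V.N A) + 1"
      have "V.N A = ennreal (enn2real (V.N A))" using that by simp
      also have "\<dots> < ennreal l" unfolding l_def by (subst ennreal_less_iff) auto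
      finally have "V.I A l \<le> 1" by (rule V.N_less)
      moreover have "l > 0" unfolding l_def using enn2real_nonneg[of "V.N A"] by linarith
      ultimately show ?thesis by blast
    qed
    define R' where "R' = max 1 (A0 * (d x0 y + r0))"
    have R'1: "R' \<ge> 1" unfolding R'_def by simp
    have sub: "qball d y r0 \<subseteq> qball d x0 R'"
    proof
      fix z assume "z \<in> qball d y r0"
      then have z: "d y z < r0" unfolding qball_def by simp
      have "d x0 z \<le> A0 * (d x0 y + d y z)" by (rule tri)
      also have "\<dots> < A0 * (d x0 y + r0)" using A0 z by (intro mult_strict_left_mono) auto
      also have "\<dots> \<le> R'" unfolding R'_def by simp
      finally show "z \<in> qball d x0 R'" unfolding qball_def by simp
    qed
    obtain l where l: "l > 0" "V.I (qball d y r0) l \<le> 1" using getl[OF Nfin] by blast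
    have "V.N (qball d x0 R') \<le> ennreal (2 * l * K1 * enn2real (emeasure M (qball d x0 R')) / enn2real (emeasure M (qball d y r0)))"
      using R'1 r0 by (intro V.fact1[OF wpos K1(1) Ap1 balls balls sub l mpos mfin]) auto
    then have "V.N (qball d x0 R') < \<infinity>" by (simp add: le_less_trans)
    moreover have "V.N (qball d x0 1) \<le> V.N (qball d x0 R')" using R'1 by (intro V.N_mono qball_mono)
    ultimately have "V.N (qball d x0 1) < \<infinity>" by (simp add: le_less_trans)
    then obtain t1 where t1: "t1 > 0" "V.I (qball d x0 1) t1 \<le> 1" using getl by blast
    define \<kappa> where "\<kappa> = log 2 C1"
    have k: "\<kappa> \<ge> 0" unfolding \<kappa>_def using C1 by simp
    define m1 where "m1 = enn2real (emeasure M (qball d x0 1))"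
    have m1e: "emeasure M (qball d x0 1) = ennreal m1" unfolding m1_def using mfin[of 1 x0] by simp
    have m1: "m1 > 0" using mpos[of 1 x0] m1e by simp
    define D where "D = 2 * t1 * K1 * C1"
    have D: "D > 0" unfolding D_def using t1 K1 C1 by simp
    have Psi: "V.N (qball d x0 R) \<le> ennreal (D * R powr \<kappa>)" if R: "R \<ge> 1" for R
    proof -
      define mR where "mR = enn2real (emeasure M (qball d x0 R))"
      have mRe: "emeasure M (qball d x0 R) = ennreal mR" unfolding mR_def using mfin[of R x0] R by simp
      have "V.N (qball d x0 R) \<le> ennreal (2 * t1 * K1 * mR / m1)"
        unfolding mR_def m1_def using R t1
        by (intro V.fact1[OF wpos K1(1) Ap1 balls balls qball_mono[OF R] t1(1) t1(2) mpos mfin]) auto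
      also have "\<dots> \<le> ennreal (D * R powr \<kappa>)"
      proof (intro ennreal_leI)
        have "emeasure M (qball d x0 R) \<le> ennreal (C1 * R powr \<kappa>) * emeasure M (qball d x0 1)"
          unfolding \<kappa>_def by (rule doubling_growth[OF dbl C1 balls R]) simp
        then have "mR \<le> C1 * R powr \<kappa> * m1" unfolding mRe m1e
          using C1 m1 by (intro ennreal_le_mult_realD) auto
        then have "mR / m1 \<le> C1 * R powr \<kappa>" using m1 by (simp add: divide_le_eq)
        then have "2 * t1 * K1 * (mR / m1) \<le> 2 * t1 * K1 * (C1 * R powr \<kappa>)"
          using t1 K1 by (intro mult_left_mono) auto
        then show "2 * t1 * K1 * mR / m1 \<le> D * R powr \<kappa>" unfolding D_def by (simp add: mult.assoc)
      qed
      finally show ?thesis .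
    qed
    show ?thesis
    proof (cases "pinf > 0")
      case True
      obtain c C where c: "c > 0" and C: "C > 0" and H: "\<forall>B\<in>sets M. 1 \<le> V.N B \<longrightarrow> V.N B < \<infinity> \<longrightarrow>
          ennreal c * epowr (V.I B 1) (1/pinf) \<le> V.N B \<and> V.N B \<le> ennreal C * epowr (V.I B 1) (1/pinf)"
        using V.main_est[OF True Cinf LHV balls D k Psi] by blast
      show ?thesis by (rule finish[OF c C]) (use H balls in blast)
    next
      case False
      have dbnd: "d x0 x < exp Cinf" for x
      proof -
        have "1 \<le> qq x" by (rule qq1)
        also have "\<dots> < pinf + Cinf / ln (exp 1 + d x x0)" using qb[of x] by linarith
        finally have "1 < Cinf / ln (exp 1 + d x x0)" using False by linarith
        then have "ln (exp 1 + d x x0) < Cinf" using lnge[of x] by (simp add: less_divide_eq)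
        then have "exp 1 + d x x0 < exp Cinf"
          using dnn[of x x0] by (metis exp_less_cancel_iff exp_ln add_pos_nonneg exp_gt_zero)
        then show ?thesis using dsym[of x0 x] exp_gt_zero[of 1] by linarith
      qed
      define Rs where "Rs = max 1 (exp Cinf)"
      have Rs: "Rs \<ge> 1" unfolding Rs_def by simp
      have univ: "qball d x0 Rs = UNIV" unfolding qball_def Rs_def
        using dbnd by (auto simp: less_max_iff_disj)
      define N1 where "N1 = max 1 (D * Rs powr \<kappa>)"
      have N1: "N1 \<ge> 1" unfolding N1_def by simp
      have bnd: "V.N B \<le> ennreal N1" if "B \<in> sets M" for B
      proof -
        have "V.N B \<le> V.N (qball d x0 Rs)" unfolding univ by (intro V.N_mono) simp
        also have "\<dots> \<le> ennreal (D * Rs powr \<kappa>)" by (rule Psi[OF Rs])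
        also have "\<dots> \<le> ennreal N1" unfolding N1_def by (intro ennreal_leI) simp
        finally show ?thesis .
      qed
      obtain c C where c: "c > 0" and C: "C > 0" and H: "\<forall>B\<in>sets M. 1 \<le> V.N B \<longrightarrow> V.N B < \<infinity> \<longrightarrow>
          ennreal c * epowr (V.I B 1) (1/pinf) \<le> V.N B \<and> V.N B \<le> ennreal C * epowr (V.I B 1) (1/pinf)"
        using V.main_bdd[of pinf N1] False N1 bnd by auto
      show ?thesis by (rule finish[OF c C]) (use H balls in blast)
    qed
  qed
qed

end
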